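(* Let $L>0$, $\tau>0$ and let $Z_1,\dots,Z_m$ be random variables with $\max_{1\le j\le m}\|Z_j\|_{\Psi_2(\cdot;L)}\le\tau$. Then $$\Big\|\Big(\max_{1\le j\le m}|Z_j|-\frac{\tau}{L}\,h_2^{-1}\Big(\frac{L^2}{2}\log(1+m)\Big)\Big)_+\Big\|_{\Psi_2(\cdot;\sqrt3 L)}\le\sqrt3\,\tau .$$
   Context: For $x\ge 0$ let $h_2(x)=(1+x)\log(1+x)-x$, an increasing bijection of $[0,\infty)$ onto itself, with inverse $h_2^{-1}$. For $L>0$ let $\Psi_2(x;L)=\exp\big(\frac{2}{L^2}h_2(Lx)\big)-1$. The Orlicz norm is $\|X\|_{\Psi}=\inf\{c>0: E\Psi(|X|/c)\le 1\}$; $(a)_+=\max(a,0)$. *)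

theory Defs
  imports "HOL-Probability.Probability"
begin

definition h2 :: "real \<Rightarrow> real" where
  "h2 x = (1 + x) * ln (1 + x) - x"

definition h2_inv :: "real \<Rightarrow> real" where
  "h2_inv y = (THE x. x \<ge> 0 \<and> h2 x = y)"

definition Psi2 :: "real \<Rightarrow> real \<Rightarrow> real" where
  "Psi2 L x = exp (2 / L\<^sup>2 * h2 (L * x)) - 1"

text \<open>Orlicz norm, valued in extended reals (infinity if no admissible c exists).
  The expectation of the nonnegative quantity is the nonnegative integral.\<close>
definition orlicz_norm :: "'a measure \<Rightarrow> (real \<Rightarrow> real) \<Rightarrow> ('a \<Rightarrow> real) \<Rightarrow> ereal" where
  "orlicz_norm M Psi X =
     Inf {ereal c | c. c > 0 \<and> (\<integral>\<^sup>+ \<omega>. ennreal (Psi (\<bar>X \<omega>\<bar> / c)) \<partial>M) \<le> 1}"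

end

theory Submission
  imports Defs
begin

lemma h2_deriv: "x > -1 \<Longrightarrow> DERIV h2 x :> ln (1 + x)"
  unfolding h2_def
  by (auto intro!: derivative_eq_intros simp: field_simps)

lemma h2_0 [simp]: "h2 0 = 0"
  by (simp add: h2_def)

lemma h2_strict_mono:
  assumes "0 \<le> x" "x < y" shows "h2 x < h2 y"
proof (rule DERIV_pos_imp_increasing_open[OF assms(2)])
  fix t assume "x < t" "t < y"
  then show "\<exists>d. DERIV h2 t :> d \<and> d > 0"
    using assms h2_deriv[of t] by (intro exI[of _ "ln (1+t)"]) auto
next
  show "continuous_on {x..y} h2"
    using assms by (intro DERIV_atLeastAtMost_imp_continuous_on) (use h2_deriv in force)
qed

lemma h2_mono: "0 \<le> x \<Longrightarrow> x \<le> y \<Longrightarrow> h2 x \<le> h2 y"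
  using h2_strict_mono by (cases "x = y") (auto simp: less_le)

lemma h2_nonneg: "0 \<le> x \<Longrightarrow> 0 \<le> h2 x"
  using h2_mono[of 0 x] by simp

lemma h2_superadd:
  assumes "0 \<le> x" "0 \<le> y" shows "h2 x + h2 y \<le> h2 (x + y)"
proof -
  let ?F = "\<lambda>t. h2 (x + t) - h2 x - h2 t"
  have "?F 0 \<le> ?F y"
  proof (rule DERIV_nonneg_imp_nondecreasing[OF assms(2)])
    fix t assume t: "0 \<le> t" "t \<le> y"
    have d1: "DERIV (\<lambda>z. h2 (x + z)) t :> ln (1 + (x + t)) * 1"
      using t assms by (intro DERIV_chain2[OF h2_deriv]) (auto intro!: derivative_eq_intros)
    have "DERIV ?F t :> ln (1 + (x + t)) * 1 - 0 - ln (1 + t)"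
      using t assms by (intro DERIV_diff d1 DERIV_const h2_deriv) auto
    moreover have "ln (1 + (x + t)) * 1 - 0 - ln (1 + t) \<ge> 0"
      using t assms by simp
    ultimately show "\<exists>d. DERIV ?F t :> d \<and> d \<ge> 0" by blast
  qed
  then show ?thesis by simp
qed

lemma h2_cont: "x > -1 \<Longrightarrow> isCont h2 x"
  using h2_deriv DERIV_isCont by blast

lemma h2_inv:
  assumes "y \<ge> 0" shows "h2_inv y \<ge> 0 \<and> h2 (h2_inv y) = y"
proof -
  define X where "X = max y (exp 2 - 1)"
  have X: "X \<ge> exp 2 - 1" "X \<ge> y" by (auto simp: X_def)
  have e2: "exp 2 > (1::real)" by simp
  have "0 < 1 + X" using X(1) e2 by linarith
  then have "ln (1 + X) \<ge> 2"
    using X(1) by (subst ln_ge_iff) auto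
  then have "(1 + X) * ln (1 + X) \<ge> (1 + X) * 2"
    using X(1) by (intro mult_left_mono) (auto, smt (verit) exp_gt_zero)
  then have "h2 X \<ge> y" using X unfolding h2_def by (smt (verit))
  moreover have "h2 0 \<le> y" using assms by simp
  moreover have "0 \<le> X" using X assms by linarith
  ultimately obtain x where x: "0 \<le> x" "x \<le> X" "h2 x = y"
    using IVT[of h2 0 y X] h2_cont by force
  have "\<exists>!x. x \<ge> 0 \<and> h2 x = y"
  proof (rule ex1I[of _ x])
    show "x \<ge> 0 \<and> h2 x = y" using x by simp
    fix z assume "z \<ge> 0 \<and> h2 z = y"
    then show "z = x" using x h2_strict_mono
      by (metis linorder_neq_iff less_irrefl)
  qed
  then show ?thesis unfolding h2_inv_def by (rule theI')
qed


lemma Psi2_mono: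
  assumes "L > 0" "0 \<le> x" "x \<le> y" shows "Psi2 L x \<le> Psi2 L y"
proof -
  have "h2 (L * x) \<le> h2 (L * y)"
    using assms by (intro h2_mono) (auto intro: mult_left_mono)
  moreover have "2 / L\<^sup>2 > 0" using assms by simp
  ultimately show ?thesis unfolding Psi2_def
    by (simp add: divide_right_mono)
qed

lemma Psi2_nonneg: "L > 0 \<Longrightarrow> 0 \<le> x \<Longrightarrow> 0 \<le> Psi2 L x"
  using Psi2_mono[of L 0 x] by (simp add: Psi2_def)

lemma Psi2_meas:
  assumes [measurable]: "X \<in> borel_measurable M"
  shows "(\<lambda>\<omega>. Psi2 L (X \<omega>)) \<in> borel_measurable M"
  unfolding Psi2_def h2_def by measurable

lemma orlicz_at:
  assumes on: "orlicz_norm M (Psi2 L) X \<le> ereal \<tau>" and "\<tau> > 0" "L > 0"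
    and Xm: "X \<in> borel_measurable M"
  shows "(\<integral>\<^sup>+\<omega>. ennreal (Psi2 L (\<bar>X \<omega>\<bar> / \<tau>)) \<partial>M) \<le> 1"
proof -
  have adm: "(\<integral>\<^sup>+\<omega>. ennreal (Psi2 L (\<bar>X \<omega>\<bar> / c)) \<partial>M) \<le> 1" if c: "c > \<tau>" for c
  proof -
    have "orlicz_norm M (Psi2 L) X < ereal c" using c by (intro le_less_trans[OF on]) simp
    then obtain c0 where c0: "ereal c0 < ereal c" "c0 > 0"
      "(\<integral>\<^sup>+\<omega>. ennreal (Psi2 L (\<bar>X \<omega>\<bar> / c0)) \<partial>M) \<le> 1"
      unfolding orlicz_norm_def Inf_less_iff by auto
    have "(\<integral>\<^sup>+\<omega>. ennreal (Psi2 L (\<bar>X \<omega>\<bar> / c)) \<partial>M)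
        \<le> (\<integral>\<^sup>+\<omega>. ennreal (Psi2 L (\<bar>X \<omega>\<bar> / c0)) \<partial>M)"
      using c0 assms
      by (intro nn_integral_mono ennreal_leI Psi2_mono) (auto intro: divide_left_mono)
    then show ?thesis using c0 by simp
  qed
  define cn where "cn n = \<tau> * (1 + 1 / real (Suc n))" for n
  have cn_gt: "cn n > \<tau>" for n using assms unfolding cn_def by simp
  have "(\<lambda>n. 1 / real (Suc n)) \<longlonglongrightarrow> 0"
    using LIMSEQ_Suc[OF lim_1_over_n] by simp
  then have "(\<lambda>n. \<tau> * (1 + 1 / real (Suc n))) \<longlonglongrightarrow> \<tau> * (1 + 0)"
    by (intro tendsto_mult tendsto_add tendsto_const)
  then have cn_lim: "cn \<longlonglongrightarrow> \<tau>"
    unfolding cn_def by simp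
  define u where "u n \<omega> = ennreal (Psi2 L (\<bar>X \<omega>\<bar> / cn n))" for n \<omega>
  have um: "u n \<in> borel_measurable M" for n
  proof -
    have [measurable]: "(\<lambda>\<omega>. Psi2 L (\<bar>X \<omega>\<bar> / cn n)) \<in> borel_measurable M"
      by (rule Psi2_meas) (use Xm in measurable)
    show ?thesis unfolding u_def by measurable
  qed
  have ulim: "liminf (\<lambda>n. u n \<omega>) = ennreal (Psi2 L (\<bar>X \<omega>\<bar> / \<tau>))" for \<omega>
  proof (rule lim_imp_Liminf)
    show "\<not> trivial_limit sequentially" by simp
    have "1 + L * (\<bar>X \<omega>\<bar> / \<tau>) \<noteq> 0" using assms
      by (smt (verit) divide_nonneg_pos mult_nonneg_nonneg abs_ge_zero)
    then show "(\<lambda>n. u n \<omega>) \<longlonglongrightarrow> ennreal (Psi2 L (\<bar>X \<omega>\<bar> / \<tau>))"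
      unfolding u_def Psi2_def h2_def using assms
      by (intro tendsto_ennrealI tendsto_intros cn_lim) auto
  qed
  have "(\<integral>\<^sup>+\<omega>. ennreal (Psi2 L (\<bar>X \<omega>\<bar> / \<tau>)) \<partial>M) = (\<integral>\<^sup>+\<omega>. liminf (\<lambda>n. u n \<omega>) \<partial>M)"
    by (simp add: ulim)
  also have "\<dots> \<le> liminf (\<lambda>n. integral\<^sup>N M (u n))"
    by (rule nn_integral_liminf[OF um])
  also have "\<dots> \<le> 1"
    by (rule Liminf_le) (auto simp: u_def[abs_def] intro!: adm cn_gt always_eventually)
  finally show ?thesis .
qed


lemma exp_third: "3 * exp (x / 3) \<le> exp x + (2::real)"
proof -
  define t where "t = exp (x / 3)"
  have t: "t > 0" by (simp add: t_def)
  have "exp x = t ^ 3" unfolding t_def by (simp flip: exp_of_nat_mult)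
  moreover have "t ^ 3 + 2 - 3 * t = (t - 1)\<^sup>2 * (t + 2)"
    by (simp add: power2_eq_square power3_eq_cube algebra_simps)
  moreover have "(t - 1)\<^sup>2 * (t + 2) \<ge> 0" using t by simp
  ultimately show ?thesis unfolding t_def[symmetric] by linarith
qed

lemma pointwise:
  fixes L \<tau> b :: real and m :: nat and z :: "nat \<Rightarrow> real"
  assumes L: "L > 0" and tau: "\<tau> > 0" and m: "m \<ge> 1" and b: "b \<ge> 0"
    and hb: "h2 b = L\<^sup>2 / 2 * ln (1 + real m)"
  shows "Psi2 (sqrt 3 * L) (\<bar>max 0 (Max ((\<lambda>j. \<bar>z j\<bar>) ` {1..m}) - \<tau> / L * b)\<bar> / (sqrt 3 * \<tau>))
    \<le> (\<Sum>j\<in>{1..m}. 1 / (3 * (1 + real m)) * (Psi2 L (\<bar>z j\<bar> / \<tau>) + 1))"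
    (is "?lhs \<le> ?rhs")
proof -
  define Mx where "Mx = Max ((\<lambda>j. \<bar>z j\<bar>) ` {1..m})"
  define s where "s = L * Mx / \<tau>"
  define \<kappa> where "\<kappa> = 1 / (3 * (1 + real m))"
  have kappa: "\<kappa> > 0" unfolding \<kappa>_def by simp
  have Pnn: "Psi2 L (\<bar>z j\<bar> / \<tau>) \<ge> 0" for j
    using L tau by (intro Psi2_nonneg) auto
  have rhs_nonneg: "?rhs \<ge> 0"
    using Pnn by (intro sum_nonneg) (simp add: add_nonneg_nonneg)
  have s3: "sqrt 3 * L > 0" using L by simp
  have sq3: "(sqrt 3 * L)\<^sup>2 = 3 * L\<^sup>2" by (simp add: power_mult_distrib)
  have arg: "sqrt 3 * L * (\<bar>max 0 (Mx - \<tau> / L * b)\<bar> / (sqrt 3 * \<tau>)) = max 0 (s - b)"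
  proof -
    have "sqrt 3 * L * (\<bar>max 0 (Mx - \<tau> / L * b)\<bar> / (sqrt 3 * \<tau>)) = L / \<tau> * max 0 (Mx - \<tau> / L * b)"
      by simp
    also have "\<dots> = max 0 (L / \<tau> * (Mx - \<tau> / L * b))"
      using L tau by (simp add: max_mult_distrib_left)
    also have "L / \<tau> * (Mx - \<tau> / L * b) = s - b"
      unfolding s_def using L tau by (simp add: field_simps)
    finally show ?thesis .
  qed
  have lhs_eq: "?lhs = exp (2 / (3 * L\<^sup>2) * h2 (max 0 (s - b))) - 1"
    unfolding Psi2_def Mx_def[symmetric] arg sq3 ..
  show ?thesis
  proof (cases "s \<le> b")
    case True
    then have "?lhs = 0" unfolding lhs_eq by simp
    then show ?thesis using rhs_nonneg by simp
  next
    case False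
    have fin: "finite ((\<lambda>j. \<bar>z j\<bar>) ` {1..m})" "(\<lambda>j. \<bar>z j\<bar>) ` {1..m} \<noteq> {}" using m by auto
    obtain k where k: "k \<in> {1..m}" "\<bar>z k\<bar> = Mx"
      using Max_in[OF fin] unfolding Mx_def by auto
    have sk: "s = L * (\<bar>z k\<bar> / \<tau>)" unfolding s_def k(2) by simp
    have "h2 (s - b) + h2 b \<le> h2 (s - b + b)"
      using False b by (intro h2_superadd) auto
    then have hs: "h2 (s - b) \<le> h2 s - L\<^sup>2 / 2 * ln (1 + real m)" using hb by simp
    define A where "A = 2 / L\<^sup>2 * h2 (s - b)"
    define B where "B = 2 / L\<^sup>2 * h2 s"
    have AB: "A \<le> B - ln (1 + real m)"
    proof -
      have "A \<le> 2 / L\<^sup>2 * (h2 s - L\<^sup>2 / 2 * ln (1 + real m))"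
        unfolding A_def using hs L by (intro mult_left_mono) auto
      also have "\<dots> = B - ln (1 + real m)" unfolding B_def using L by (simp add: field_simps)
      finally show ?thesis .
    qed
    have "?lhs = exp (A / 3) - 1" unfolding lhs_eq A_def using False by (simp add: field_simps)
    also have "\<dots> \<le> exp A / 3" using exp_third[of A] by simp
    also have "exp A \<le> exp (B - ln (1 + real m))" using AB by simp
    also have "exp (B - ln (1 + real m)) = exp B / (1 + real m)"
      by (simp add: exp_diff)
    also have "exp B = Psi2 L (\<bar>z k\<bar> / \<tau>) + 1" unfolding B_def Psi2_def sk by simp
    also have "(Psi2 L (\<bar>z k\<bar> / \<tau>) + 1) / (1 + real m) / 3 = \<kappa> * (Psi2 L (\<bar>z k\<bar> / \<tau>) + 1)"
      unfolding \<kappa>_def by (simp add: field_simps)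
    also have "\<dots> \<le> ?rhs" unfolding \<kappa>_def[symmetric]
      using k(1) kappa Pnn
      by (intro member_le_sum) (auto intro!: mult_nonneg_nonneg add_nonneg_nonneg)
    finally show ?thesis by simp
  qed
qed


theorem lemma10:
  fixes M :: "'a measure" and Z :: "nat \<Rightarrow> 'a \<Rightarrow> real" and L \<tau> :: real and m :: nat
  assumes "prob_space M"
    and "L > 0" and "\<tau> > 0" and "m \<ge> 1"
    and "\<And>j. j \<in> {1..m} \<Longrightarrow> Z j \<in> borel_measurable M"
    and "\<And>j. j \<in> {1..m} \<Longrightarrow> orlicz_norm M (Psi2 L) (Z j) \<le> ereal \<tau>"
  shows "orlicz_norm M (Psi2 (sqrt 3 * L))
           (\<lambda>\<omega>. max 0 (Max ((\<lambda>j. \<bar>Z j \<omega>\<bar>) ` {1..m})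
                   - \<tau> / L * h2_inv (L\<^sup>2 / 2 * ln (1 + real m))))
         \<le> ereal (sqrt 3 * \<tau>)"
proof -
  note P = assms(1) and L = assms(2) and tau = assms(3) and m = assms(4)
    and Zm = assms(5) and Zn = assms(6)
  define b where "b = h2_inv (L\<^sup>2 / 2 * ln (1 + real m))"
  have "L\<^sup>2 / 2 * ln (1 + real m) \<ge> 0" by simp
  from h2_inv[OF this] have b: "b \<ge> 0" "h2 b = L\<^sup>2 / 2 * ln (1 + real m)"
    unfolding b_def by auto
  define \<kappa> where "\<kappa> = 1 / (3 * (1 + real m))"
  have kappa: "\<kappa> > 0" unfolding \<kappa>_def by simp
  define P where "P j \<omega> = Psi2 L (\<bar>Z j \<omega>\<bar> / \<tau>)" for j \<omega>
  have Pnn: "P j \<omega> \<ge> 0" for j \<omega>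
    unfolding P_def using L tau by (intro Psi2_nonneg) auto
  have Pm: "(\<lambda>\<omega>. ennreal (P j \<omega>)) \<in> borel_measurable M" if "j \<in> {1..m}" for j
  proof -
    have [measurable]: "Z j \<in> borel_measurable M" using Zm that .
    have [measurable]: "(\<lambda>\<omega>. P j \<omega>) \<in> borel_measurable M"
      unfolding P_def by (rule Psi2_meas) measurable
    show ?thesis by measurable
  qed
  have PI: "(\<integral>\<^sup>+\<omega>. ennreal (P j \<omega>) \<partial>M) \<le> 1" if "j \<in> {1..m}" for j
    unfolding P_def using orlicz_at[OF Zn[OF that] tau L Zm[OF that]] .
  have one: "(\<integral>\<^sup>+\<omega>. 1 \<partial>M) = 1"
    using P by (simp add: prob_space.emeasure_space_1)
  let ?W = "\<lambda>\<omega>. max 0 (Max ((\<lambda>j. \<bar>Z j \<omega>\<bar>) ` {1..m}) - \<tau> / L * b)"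
  have pw: "ennreal (Psi2 (sqrt 3 * L) (\<bar>?W \<omega>\<bar> / (sqrt 3 * \<tau>)))
      \<le> (\<Sum>j\<in>{1..m}. ennreal \<kappa> * (ennreal (P j \<omega>) + 1))" for \<omega>
  proof -
    have "ennreal (Psi2 (sqrt 3 * L) (\<bar>?W \<omega>\<bar> / (sqrt 3 * \<tau>)))
        \<le> ennreal (\<Sum>j\<in>{1..m}. \<kappa> * (P j \<omega> + 1))"
      unfolding \<kappa>_def P_def
      by (intro ennreal_leI pointwise L tau m b)
    also have "\<dots> = (\<Sum>j\<in>{1..m}. ennreal (\<kappa> * (P j \<omega> + 1)))"
      using kappa Pnn by (subst sum_ennreal) (auto intro!: mult_nonneg_nonneg add_nonneg_nonneg)
    also have "\<dots> = (\<Sum>j\<in>{1..m}. ennreal \<kappa> * (ennreal (P j \<omega>) + 1))"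
      using Pnn by (intro sum.cong refl) (simp add: ennreal_mult'' add_nonneg_nonneg ennreal_plus)
    finally show ?thesis .
  qed
  have "(\<integral>\<^sup>+\<omega>. ennreal (Psi2 (sqrt 3 * L) (\<bar>?W \<omega>\<bar> / (sqrt 3 * \<tau>))) \<partial>M)
      \<le> (\<integral>\<^sup>+\<omega>. (\<Sum>j\<in>{1..m}. ennreal \<kappa> * (ennreal (P j \<omega>) + 1)) \<partial>M)"
    by (intro nn_integral_mono pw)
  also have "\<dots> = (\<Sum>j\<in>{1..m}. (\<integral>\<^sup>+\<omega>. ennreal \<kappa> * (ennreal (P j \<omega>) + 1) \<partial>M))"
    using Pm by (intro nn_integral_sum) auto
  also have "\<dots> = (\<Sum>j\<in>{1..m}. ennreal \<kappa> * ((\<integral>\<^sup>+\<omega>. ennreal (P j \<omega>) \<partial>M) + 1))"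
  proof (intro sum.cong refl)
    fix j assume j: "j \<in> {1..m}"
    have "(\<integral>\<^sup>+\<omega>. ennreal \<kappa> * (ennreal (P j \<omega>) + 1) \<partial>M)
        = ennreal \<kappa> * (\<integral>\<^sup>+\<omega>. (ennreal (P j \<omega>) + 1) \<partial>M)"
      using Pm[OF j] by (intro nn_integral_cmult) auto
    also have "(\<integral>\<^sup>+\<omega>. (ennreal (P j \<omega>) + 1) \<partial>M) = (\<integral>\<^sup>+\<omega>. ennreal (P j \<omega>) \<partial>M) + (\<integral>\<^sup>+\<omega>. 1 \<partial>M)"
      using Pm[OF j] by (intro nn_integral_add) auto
    finally show "(\<integral>\<^sup>+\<omega>. ennreal \<kappa> * (ennreal (P j \<omega>) + 1) \<partial>M)
        = ennreal \<kappa> * ((\<integral>\<^sup>+\<omega>. ennreal (P j \<omega>) \<partial>M) + 1)" unfolding one .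
  qed
  also have "\<dots> \<le> (\<Sum>j\<in>{1..m}. ennreal \<kappa> * (1 + 1))"
  proof (rule sum_mono)
    fix j assume j: "j \<in> {1..m}"
    show "ennreal \<kappa> * ((\<integral>\<^sup>+\<omega>. ennreal (P j \<omega>) \<partial>M) + 1) \<le> ennreal \<kappa> * (1 + 1)"
      by (rule mult_left_mono[OF add_right_mono[OF PI[OF j]]]) simp
  qed
  also have "\<dots> = ennreal (real m * (2 * \<kappa>))"
  proof -
    have c: "ennreal \<kappa> * (1 + 1) = ennreal (2 * \<kappa>)"
      using kappa by (simp add: ennreal_mult one_add_one mult.commute)
    have "(\<Sum>j\<in>{1..m}. ennreal \<kappa> * (1 + 1)) = of_nat m * ennreal (2 * \<kappa>)"
      unfolding c by simp
    also have "\<dots> = ennreal (real m * (2 * \<kappa>))"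
      using kappa by (simp add: ennreal_of_nat_eq_real_of_nat ennreal_mult)
    finally show ?thesis .
  qed
  also have "\<dots> \<le> 1"
    unfolding \<kappa>_def by (simp add: field_simps)
  finally have int: "(\<integral>\<^sup>+\<omega>. ennreal (Psi2 (sqrt 3 * L) (\<bar>?W \<omega>\<bar> / (sqrt 3 * \<tau>))) \<partial>M) \<le> 1" .
  have "ereal (sqrt 3 * \<tau>) \<in> {ereal c | c. c > 0 \<and>
      (\<integral>\<^sup>+ \<omega>. ennreal (Psi2 (sqrt 3 * L) (\<bar>?W \<omega>\<bar> / c)) \<partial>M) \<le> 1}"
    using int tau by auto
  then show ?thesis unfolding orlicz_norm_def b_def[symmetric] by (rule Inf_lower)
qed

end
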